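(* Let $q$ be a prime power and $\mathcal{L}$ a non-empty set of lines of $\mathrm{PG}(n,q)$ satisfying (Pt), (Pl), (Sd) and (To) (see context). Let $M$ be a subspace of $\mathrm{PG}(n,q)$, and let $\ell\in\mathcal{L}\setminus\mathcal{L}_M$ be a line that meets a line $s\in\mathcal{L}_M$. Then: (a) $s$ is the only line of $\mathcal{L}_M$ meeting $\ell$. (b) If $\ell^M\in\mathcal{L}_M$ meets $s$ in exactly one point, then $\mathcal{L}_{\langle \ell^M,\ell\rangle}=\mathcal{L}_{\langle \ell^M,s\rangle}\cup\mathcal{L}_{\langle s,\ell\rangle}$. (c) If $\ell^M_1,\ell^M_2\in\mathcal{L}_M$ meet $s$ in exactly one point $P$, resp. $Q$, then $\mathcal{L}_{\langle \ell^M_1,\ell\rangle}\cap\mathcal{L}_{\langle \ell^M_2,\ell\rangle}=\mathcal{L}_{\langle \ell^M_1,\ell\rangle}$ if $P=Q$, and $=\mathcal{L}_{\langle s,\ell\rangle}$ if $P\ne Q$. (d) If $\ell^M_1\in\mathcal{L}_M$ meets $s$ in exactly one point and $\ell^M_2\in\mathcal{L}_M$ is disjoint from $s$, then $\mathcal{L}_{\langle \ell^M_1,\ell\rangle}\cap\mathcal{L}_{\langle \ell^M_2,\ell\rangle}=\{\ell\}$.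
   Context: (Pt): every point of $\mathrm{PG}(n,q)$ lies on $0$ or $q+1$ lines of $\mathcal{L}$. (Pl): every plane contains $0$, $1$ or $q+1$ lines of $\mathcal{L}$. (Sd): every solid ($3$-dimensional subspace) contains $0$, $1$, $q+1$ or $2q+1$ lines of $\mathcal{L}$. (To): $|\mathcal{L}|\le q^5+q^4+q^3+q^2+q+1$. For a subspace $W$, $\mathcal{L}_W$ denotes the set of lines of $\mathcal{L}$ contained in $W$; $\langle X,Y\rangle$ denotes the subspace spanned by $X$ and $Y$. *)

theory Defs
  imports "HOL-Analysis.Analysis"
begin

text \<open>Model of PG(n,q): the projective space of the vector space 'a^'n over a finite
field 'a with CARD('a) = q, where CARD('n) = n+1. Projective subspaces are linear
subspaces; a projective subspace of projective dimension k is a linear subspace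
of (vector) dimension k+1.\<close>

definition pg_subspace :: "('a::field ^ 'n) set \<Rightarrow> bool" where
  "pg_subspace W \<longleftrightarrow> vec.subspace W"

definition pg_point :: "('a::field ^ 'n) set \<Rightarrow> bool" where
  "pg_point W \<longleftrightarrow> vec.subspace W \<and> vec.dim W = 1"

definition pg_line :: "('a::field ^ 'n) set \<Rightarrow> bool" where
  "pg_line W \<longleftrightarrow> vec.subspace W \<and> vec.dim W = 2"

definition pg_plane :: "('a::field ^ 'n) set \<Rightarrow> bool" where
  "pg_plane W \<longleftrightarrow> vec.subspace W \<and> vec.dim W = 3"

definition pg_solid :: "('a::field ^ 'n) set \<Rightarrow> bool" where
  "pg_solid W \<longleftrightarrow> vec.subspace W \<and> vec.dim W = 4"

definition pg_join :: "('a::field ^ 'n) set \<Rightarrow> ('a ^ 'n) set \<Rightarrow> ('a ^ 'n) set" where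
  "pg_join X Y = vec.span (X \<union> Y)"

definition pg_meet :: "('a::field ^ 'n) set \<Rightarrow> ('a ^ 'n) set \<Rightarrow> bool" where
  "pg_meet X Y \<longleftrightarrow> (\<exists>P. pg_point P \<and> P \<subseteq> X \<and> P \<subseteq> Y)"

definition pg_meet_in_point :: "('a::field ^ 'n) set \<Rightarrow> ('a ^ 'n) set \<Rightarrow> ('a ^ 'n) set \<Rightarrow> bool" where
  "pg_meet_in_point X Y P \<longleftrightarrow> pg_point P \<and> X \<inter> Y = P"

definition lines_in :: "('a::field ^ 'n) set set \<Rightarrow> ('a ^ 'n) set \<Rightarrow> ('a ^ 'n) set set" where
  "lines_in L W = {l \<in> L. l \<subseteq> W}"

definition cond_Pt :: "('a::{field,finite} ^ 'n) set set \<Rightarrow> bool" where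
  "cond_Pt L \<longleftrightarrow> (\<forall>P. pg_point P \<longrightarrow>
      card {l \<in> L. P \<subseteq> l} = 0 \<or> card {l \<in> L. P \<subseteq> l} = CARD('a) + 1)"

definition cond_Pl :: "('a::{field,finite} ^ 'n) set set \<Rightarrow> bool" where
  "cond_Pl L \<longleftrightarrow> (\<forall>\<pi>. pg_plane \<pi> \<longrightarrow> card (lines_in L \<pi>) \<in> {0, 1, CARD('a) + 1})"

definition cond_Sd :: "('a::{field,finite} ^ 'n) set set \<Rightarrow> bool" where
  "cond_Sd L \<longleftrightarrow> (\<forall>S. pg_solid S \<longrightarrow>
      card (lines_in L S) \<in> {0, 1, CARD('a) + 1, 2 * CARD('a) + 1})"

definition cond_To :: "('a::{field,finite} ^ 'n) set set \<Rightarrow> bool" where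
  "cond_To L \<longleftrightarrow> (let q = CARD('a) in card L \<le> q^5 + q^4 + q^3 + q^2 + q + 1)"

end

theory Submission
  imports Defs
begin


lemma grass:
  assumes "vec.subspace (A::('a::field^'n) set)" "vec.subspace B"
  shows "vec.dim (vec.span (A \<union> B)) + vec.dim (A \<inter> B) = vec.dim A + vec.dim B"
proof -
  have "vec.span (A \<union> B) = {x + y |x y. x \<in> A \<and> y \<in> B}"
  proof -
    have e: "vec.span A = A" "vec.span B = B" using assms vec.span_eq_iff by blast+
    show ?thesis using vec.span_Un[of A B] unfolding e by simp
  qed
  then show ?thesis using vec.dim_sums_Int[OF assms] by simp
qed

lemma span_sub:
  assumes "A \<subseteq> C" "B \<subseteq> C" "vec.subspace (C::('a::field^'n) set)"
  shows "vec.span (A \<union> B) \<subseteq> C"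
  using assms by (simp add: vec.span_minimal)

lemma span_sup1: "A \<subseteq> vec.span (A \<union> B)" using vec.span_superset by blast
lemma span_sup2: "B \<subseteq> vec.span (A \<union> B)" using vec.span_superset by blast

lemma sub_eq:
  assumes "vec.subspace (A::('a::field^'n) set)" "vec.subspace B" "A \<subseteq> B" "vec.dim B \<le> vec.dim A"
  shows "A = B"
  using vec.subspace_dim_equal assms by blast

lemma dim_pos_point:
  assumes "vec.subspace (X::('a::field^'n) set)" "vec.dim X \<ge> 1"
  shows "\<exists>P. vec.subspace P \<and> vec.dim P = 1 \<and> P \<subseteq> X"
proof -
  from assms have "\<not> X \<subseteq> {0}" using vec.dim_eq_0 by (metis not_one_le_zero)
  then obtain v where v: "v \<in> X" "v \<noteq> 0" by blast
  have "vec.independent {v}" using v by (simp add: vec.independent_insert)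
  then have "vec.dim (vec.span {v}) = 1" by (simp add: vec.dim_span_eq_card_independent)
  moreover have "vec.span {v} \<subseteq> X" using v assms by (simp add: vec.span_minimal)
  ultimately show ?thesis using vec.subspace_span by blast
qed



lemma card3:
  assumes "finite A" "finite B" "finite C"
  shows "card A + card B + card C \<le> card (A \<union> B \<union> C) + card (A \<inter> B) + card (A \<inter> C) + card (B \<inter> C)"
proof -
  have 1: "card A + card B = card (A \<union> B) + card (A \<inter> B)" using card_Un_Int assms by blast
  have 2: "card (A \<union> B) + card C = card (A \<union> B \<union> C) + card ((A \<union> B) \<inter> C)"
    using card_Un_Int assms by (metis finite_UnI)
  have "(A \<union> B) \<inter> C = (A \<inter> C) \<union> (B \<inter> C)" by blast
  then have "card ((A \<union> B) \<inter> C) \<le> card (A \<inter> C) + card (B \<inter> C)" by (metis card_Un_le)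
  with 1 2 show ?thesis by linarith
qed

lemma lines_in_Int: "lines_in L A \<inter> lines_in L B = lines_in L (A \<inter> B)"
  unfolding lines_in_def by blast

lemma lines_in_mono: "A \<subseteq> B \<Longrightarrow> lines_in L A \<subseteq> lines_in L B"
  unfolding lines_in_def by blast

lemma meet_iff:
  assumes "vec.subspace X" "vec.subspace Y"
  shows "pg_meet X Y \<longleftrightarrow> vec.dim (X \<inter> Y) \<ge> 1"
proof
  assume "pg_meet X Y"
  then obtain P where "pg_point P" "P \<subseteq> X \<inter> Y" unfolding pg_meet_def by blast
  then show "vec.dim (X \<inter> Y) \<ge> 1" unfolding pg_point_def by (metis vec.dim_subset)
next
  assume "vec.dim (X \<inter> Y) \<ge> 1"
  then obtain P where "vec.subspace P" "vec.dim P = 1" "P \<subseteq> X \<inter> Y"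
    using dim_pos_point[of "X \<inter> Y"] assms vec.subspace_inter by blast
  then show "pg_meet X Y" unfolding pg_meet_def pg_point_def by blast
qed

lemma card_field: "CARD('a::{field,finite}) \<ge> 2"
proof -
  have "card {0::'a, 1} = 2" by simp
  moreover have "card {0::'a, 1} \<le> CARD('a)" by (rule card_mono) simp_all
  ultimately show ?thesis by simp
qed

locale conf =
  fixes L :: "('a::{field,finite}^'n) set set"
  assumes lines: "\<forall>x\<in>L. pg_line x" and Pl: "cond_Pl L" and Sd: "cond_Sd L" and Pt: "cond_Pt L"
begin

lemma line_sub: "x \<in> L \<Longrightarrow> vec.subspace x" using lines unfolding pg_line_def by blast
lemma line_dim: "x \<in> L \<Longrightarrow> vec.dim x = 2" using lines unfolding pg_line_def by blast

lemma fin: "finite (A :: ('a^'n) set set)" by simp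

lemma plane_card:
  assumes "vec.subspace p" "vec.dim p = 3" "a \<in> L" "b \<in> L" "a \<noteq> b" "a \<subseteq> p" "b \<subseteq> p"
  shows "card (lines_in L p) = CARD('a) + 1"
proof -
  have "{a, b} \<subseteq> lines_in L p" using assms unfolding lines_in_def by blast
  then have "card (lines_in L p) \<ge> 2" using assms(5) by (metis card_2_iff card_mono fin)
  moreover have "card (lines_in L p) \<in> {0, 1, CARD('a) + 1}"
    using Pl assms unfolding cond_Pl_def pg_plane_def by blast
  ultimately show ?thesis by auto
qed

lemma solid_card:
  assumes "vec.subspace S" "vec.dim S = 4"
  shows "card (lines_in L S) \<le> 2 * CARD('a) + 1"
  using Sd assms unfolding cond_Sd_def pg_solid_def by auto

lemma small:
  assumes "vec.subspace X" "vec.dim X \<le> 2" "x \<in> lines_in L X"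
  shows "x = X"
  using assms sub_eq[of x X] line_sub line_dim unfolding lines_in_def by auto

lemma small_card:
  assumes "vec.subspace X" "vec.dim X \<le> 2"
  shows "card (lines_in L X) \<le> 1"
proof -
  have "lines_in L X \<subseteq> {X}" using small assms by blast
  then show ?thesis by (metis card.empty card.insert card_mono empty_iff finite.intros(1) le_numeral_extra(4) subset_singletonD zero_le_one One_nat_def)
qed

lemma int_le1:
  assumes "x \<in> L" "y \<in> L" "x \<noteq> y"
  shows "vec.dim (x \<inter> y) \<le> 1"
proof (rule ccontr)
  assume "\<not> ?thesis"
  then have "vec.dim (x \<inter> y) \<ge> 2" by simp
  then have "x \<inter> y = x" "x \<inter> y = y"
    using sub_eq[of "x \<inter> y" x] sub_eq[of "x \<inter> y" y] assms line_sub line_dim vec.subspace_inter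
    by (metis inf.cobounded1 inf.cobounded2)+
  then show False using assms by simp
qed

lemma plane_of:
  assumes "x \<in> L" "y \<in> L" "x \<noteq> y" "vec.dim (x \<inter> y) \<ge> 1"
  shows "vec.dim (vec.span (x \<union> y)) = 3"
  using grass[of x y] int_le1[OF assms(1-3)] assms line_sub line_dim by auto

lemma planes_int_dim:
  assumes "vec.subspace p1" "vec.subspace p2" "vec.dim p1 = 3" "vec.dim p2 = 3" "p1 \<noteq> p2"
  shows "vec.dim (p1 \<inter> p2) \<le> 2"
  proof (rule ccontr)
    assume "\<not> ?thesis"
    then have "p1 \<inter> p2 = p1" "p1 \<inter> p2 = p2"
      using sub_eq[of "p1 \<inter> p2" p1] sub_eq[of "p1 \<inter> p2" p2] assms vec.subspace_inter by auto
    then show False using assms by blast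
  qed

lemma planes_int:
  assumes "vec.subspace p1" "vec.subspace p2" "vec.dim p1 = 3" "vec.dim p2 = 3" "p1 \<noteq> p2"
  shows "card (lines_in L p1 \<inter> lines_in L p2) \<le> 1"
proof -
  have "vec.dim (p1 \<inter> p2) \<le> 2"
  proof (rule ccontr)
    assume "\<not> ?thesis"
    then have "p1 \<inter> p2 = p1" "p1 \<inter> p2 = p2"
      using sub_eq[of "p1 \<inter> p2" p1] sub_eq[of "p1 \<inter> p2" p2] assms vec.subspace_inter by auto
    then show False using assms by blast
  qed
  then show ?thesis using small_card[of "p1 \<inter> p2"] lines_in_Int assms vec.subspace_inter by metis
qed

lemma three_planes:
  assumes "vec.subspace S" "vec.dim S = 4"
    and "vec.subspace p1" "vec.subspace p2" "vec.subspace p3"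
    and "vec.dim p1 = 3" "vec.dim p2 = 3" "vec.dim p3 = 3"
    and "p1 \<noteq> p2" "p1 \<noteq> p3" "p2 \<noteq> p3"
    and "p1 \<subseteq> S" "p2 \<subseteq> S" "p3 \<subseteq> S"
    and "card (lines_in L p1) = CARD('a) + 1" "card (lines_in L p2) = CARD('a) + 1"
        "card (lines_in L p3) = CARD('a) + 1"
  shows False
proof -
  let ?A = "lines_in L p1" and ?B = "lines_in L p2" and ?C = "lines_in L p3"
  have c: "card ?A + card ?B + card ?C \<le> card (?A \<union> ?B \<union> ?C) + card (?A \<inter> ?B) + card (?A \<inter> ?C) + card (?B \<inter> ?C)"
    by (rule card3) simp_all
  have i: "card (?A \<inter> ?B) \<le> 1" "card (?A \<inter> ?C) \<le> 1" "card (?B \<inter> ?C) \<le> 1"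
    using planes_int assms by auto
  have "?A \<union> ?B \<union> ?C \<subseteq> lines_in L S" using lines_in_mono assms by (metis Un_least)
  then have "card (?A \<union> ?B \<union> ?C) \<le> 2 * CARD('a) + 1"
    using solid_card[OF assms(1,2)] by (meson card_mono fin le_trans)
  then show False using c i assms(15-17) card_field[where 'a='a] by linarith
qed

lemma concurrent:
  assumes "a \<in> L" "b \<in> L" "c \<in> L" "a \<noteq> b" "a \<noteq> c" "b \<noteq> c"
    and "pg_point P" "P \<subseteq> a" "P \<subseteq> b" "P \<subseteq> c"
  shows "c \<subseteq> vec.span (a \<union> b)"
proof (rule ccontr)
  assume nc: "\<not> ?thesis"
  have sa: "vec.subspace a" "vec.subspace b" "vec.subspace c" using assms line_sub by auto
  have dP: "vec.dim P = 1" "vec.subspace P" using assms(7) unfolding pg_point_def by auto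
  have m: "vec.dim (x \<inter> y) \<ge> 1" if "P \<subseteq> x" "P \<subseteq> y" for x y
    using vec.dim_subset[of P "x \<inter> y"] that dP by auto
  define pab where "pab = vec.span (a \<union> b)"
  define pac where "pac = vec.span (a \<union> c)"
  define pbc where "pbc = vec.span (b \<union> c)"
  have d3: "vec.dim pab = 3" "vec.dim pac = 3" "vec.dim pbc = 3"
    unfolding pab_def pac_def pbc_def using plane_of m assms by auto
  have sp: "vec.subspace pab" "vec.subspace pac" "vec.subspace pbc"
    unfolding pab_def pac_def pbc_def by (auto intro: vec.subspace_span)
  define S where "S = vec.span (pab \<union> c)"
  have subS: "vec.subspace S" unfolding S_def by (rule vec.subspace_span)
  have "vec.dim (pab \<inter> c) \<le> 1"
  proof (rule ccontr)
    assume "\<not> ?thesis"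
    then have "pab \<inter> c = c" using sub_eq[of "pab \<inter> c" c] sp sa vec.subspace_inter line_dim assms by auto
    then show False using nc pab_def by blast
  qed
  moreover have "vec.dim (pab \<inter> c) \<ge> 1"
  proof -
    have "P \<subseteq> pab" using assms(8) vec.span_superset[of "a \<union> b"] unfolding pab_def by auto
    then show ?thesis using m assms by blast
  qed
  moreover have "vec.dim S + vec.dim (pab \<inter> c) = 3 + 2"
    using grass[OF sp(1) sa(3)] d3(1) line_dim[OF assms(3)] unfolding S_def by simp
  ultimately have dS: "vec.dim S = 4" by linarith
  have "pab \<subseteq> S" "c \<subseteq> S" unfolding S_def using vec.span_superset[of "pab \<union> c"] by auto
  moreover have "a \<subseteq> pab" "b \<subseteq> pab" unfolding pab_def using vec.span_superset[of "a \<union> b"] by auto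
  ultimately have inS: "a \<subseteq> S" "b \<subseteq> S" "c \<subseteq> S" by auto
  have ps: "pab \<subseteq> S" "pac \<subseteq> S" "pbc \<subseteq> S"
    unfolding pab_def pac_def pbc_def using inS subS span_sub[of a S b] span_sub[of a S c] span_sub[of b S c] by simp_all
  have "c \<subseteq> pac" unfolding pac_def using vec.span_superset[of "a \<union> c"] by auto
  then have n1: "pab \<noteq> pac" using nc pab_def by auto
  have "c \<subseteq> pbc" unfolding pbc_def using vec.span_superset[of "b \<union> c"] by auto
  then have n2: "pab \<noteq> pbc" using nc pab_def by auto
  have n3: "pac \<noteq> pbc"
  proof
    assume e: "pac = pbc"
    have "a \<subseteq> pac" "b \<subseteq> pbc" unfolding pac_def pbc_def using vec.span_superset[of "a \<union> c"] vec.span_superset[of "b \<union> c"] by auto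
    then have "a \<subseteq> pac" "b \<subseteq> pac" using e by auto
    then have "pab \<subseteq> pac" unfolding pab_def using sp span_sub[of a pac b] by simp
    then have "pab = pac" using sub_eq[of pab pac] sp d3 by simp
    then show False using n1 by blast
  qed
  have cards: "card (lines_in L pab) = CARD('a) + 1" "card (lines_in L pac) = CARD('a) + 1"
    "card (lines_in L pbc) = CARD('a) + 1"
    using plane_card[OF sp(1) d3(1) assms(1,2,4)] plane_card[OF sp(2) d3(2) assms(1,3,5)]
      plane_card[OF sp(3) d3(3) assms(2,3,6)] vec.span_superset[of "a \<union> b"]
      vec.span_superset[of "a \<union> c"] vec.span_superset[of "b \<union> c"]
    unfolding pab_def pac_def pbc_def by auto
  show False using three_planes[OF subS dS sp d3 n1 n2 n3 ps cards] .
qed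

end

locale conf2 = conf L for L :: "('a::{field,finite}^'n) set set" +
  fixes M l s :: "('a^'n) set"
  assumes M: "vec.subspace M" and lL: "l \<in> L" and lM: "\<not> l \<subseteq> M"
    and sL: "s \<in> L" and sM: "s \<subseteq> M" and ls: "pg_meet l s"
begin

lemma ls_ne: "l \<noteq> s" using lM sM by blast

lemma dls: "vec.dim (l \<inter> s) \<ge> 1" "vec.dim (s \<inter> l) \<ge> 1"
  using ls meet_iff[of l s] line_sub lL sL by (auto simp: Int_commute)

lemma dlM: "vec.dim (l \<inter> M) \<le> 1"
proof (rule ccontr)
  assume "\<not> ?thesis"
  moreover have "vec.subspace (l \<inter> M)" using vec.subspace_inter[OF line_sub[OF lL] M] .
  ultimately have "l \<inter> M = l" using sub_eq[of "l \<inter> M" l] line_sub[OF lL] line_dim[OF lL]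
    by simp
  then show False using lM by blast
qed

lemma partA:
  assumes t: "t \<in> L" "t \<subseteq> M" "pg_meet t l"
  shows "t = s"
proof (rule ccontr)
  assume ts: "t \<noteq> s"
  have sub0: "vec.subspace l" "vec.subspace t" "vec.subspace s"
    using line_sub lL sL t by auto
  have sub: "vec.subspace l" "vec.subspace t" "vec.subspace s" "vec.subspace (l \<inter> M)"
    "vec.subspace (l \<inter> s)" "vec.subspace (l \<inter> t)"
    using sub0 vec.subspace_inter[OF sub0(1) M] vec.subspace_inter[OF sub0(1) sub0(3)]
      vec.subspace_inter[OF sub0(1) sub0(2)] by auto
  have dlt: "vec.dim (l \<inter> t) \<ge> 1" using t meet_iff[of t l] sub by (simp add: Int_commute)
  have e1: "l \<inter> s = l \<inter> M" using sub_eq[of "l \<inter> s" "l \<inter> M"] sub dls dlM sM by auto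
  have e2: "l \<inter> t = l \<inter> M" using sub_eq[of "l \<inter> t" "l \<inter> M"] sub dlt dlM t by auto
  have R: "pg_point (l \<inter> M)" unfolding pg_point_def using sub(4) dls(1) dlM e1 by simp
  have "l \<subseteq> vec.span (s \<union> t)"
    by (rule concurrent[OF sL t(1) lL ts[symmetric] ls_ne[symmetric] _ R]) (use e1 e2 t lM in auto)
  moreover have "vec.span (s \<union> t) \<subseteq> M" using span_sub[OF sM t(2) M] .
  ultimately show False using lM by blast
qed

lemma disj:
  assumes "x \<in> L" "x \<subseteq> M" "x \<noteq> s"
  shows "vec.dim (x \<inter> l) = 0" "vec.dim (vec.span (x \<union> l)) = 4"
proof -
  have "\<not> pg_meet x l" using partA assms by blast
  then have "\<not> vec.dim (x \<inter> l) \<ge> 1" using meet_iff[of x l] line_sub assms lL by simp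
  then show d0: "vec.dim (x \<inter> l) = 0" by linarith
  show "vec.dim (vec.span (x \<union> l)) = 4" using grass[of x l] d0 line_sub line_dim assms lL by simp
qed

lemma notS:
  assumes "pg_meet_in_point x s P"
  shows "x \<noteq> s" "vec.dim (x \<inter> s) = 1"
proof -
  show "vec.dim (x \<inter> s) = 1" using assms unfolding pg_meet_in_point_def pg_point_def by simp
  then show "x \<noteq> s" using line_dim[OF sL] by auto
qed

lemma s_in:
  assumes x: "x \<in> L" "x \<subseteq> M" "pg_meet_in_point x s P"
  shows "s \<subseteq> vec.span (x \<union> l)"
proof -
  define S where "S = vec.span (x \<union> l)"
  have xs: "x \<noteq> s" "vec.dim (s \<inter> x) = 1" using notS[OF x(3)] by (auto simp: Int_commute)
  have d0: "vec.dim (x \<inter> l) = 0" using disj x xs by blast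
  have sub: "vec.subspace x" "vec.subspace s" "vec.subspace l" "vec.subspace S"
    using line_sub x sL lL S_def vec.subspace_span by auto
  define D where "D = vec.span ((s \<inter> x) \<union> (s \<inter> l))"
  have "vec.dim ((s \<inter> x) \<inter> (s \<inter> l)) \<le> vec.dim (x \<inter> l)" by (rule vec.dim_subset) blast
  then have z: "vec.dim ((s \<inter> x) \<inter> (s \<inter> l)) \<le> 0" using d0 by linarith
  have g: "vec.dim D + vec.dim ((s \<inter> x) \<inter> (s \<inter> l)) = vec.dim (s \<inter> x) + vec.dim (s \<inter> l)"
    unfolding D_def by (rule grass) (use vec.subspace_inter sub in blast)+
  have "vec.dim D \<ge> 2" using g z xs(2) dls(2) by linarith
  moreover have "D \<subseteq> s \<inter> S"
  proof -
    have "x \<subseteq> S" "l \<subseteq> S" unfolding S_def using span_sup1[of x l] span_sup2[of l x] by auto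
    then show ?thesis unfolding D_def
      using span_sub[of "s \<inter> x" "s \<inter> S" "s \<inter> l"] sub vec.subspace_inter by blast
  qed
  ultimately have "vec.dim (s \<inter> S) \<ge> 2" using vec.dim_subset by (metis le_trans)
  moreover have "vec.subspace (s \<inter> S)" using vec.subspace_inter[OF sub(2,4)] .
  ultimately have "s \<inter> S = s" using sub_eq[of "s \<inter> S" s] sub line_dim[OF sL] by simp
  then show ?thesis unfolding S_def by blast
qed

lemma partB:
  assumes x: "x \<in> L" "x \<subseteq> M" "pg_meet_in_point x s P"
  shows "lines_in L (vec.span (x \<union> l)) = lines_in L (vec.span (x \<union> s)) \<union> lines_in L (vec.span (s \<union> l))"
proof -
  define S where "S = vec.span (x \<union> l)"
  define pa where "pa = vec.span (x \<union> s)"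
  define pb where "pb = vec.span (s \<union> l)"
  have xs: "x \<noteq> s" "vec.dim (x \<inter> s) = 1" using notS[OF x(3)] by auto
  have dS: "vec.dim S = 4" using disj x xs S_def by blast
  have sub: "vec.subspace S" "vec.subspace pa" "vec.subspace pb"
    unfolding S_def pa_def pb_def by (auto intro: vec.subspace_span)
  have d3: "vec.dim pa = 3" "vec.dim pb = 3"
    unfolding pa_def pb_def using plane_of x xs sL lL ls_ne dls by auto
  have sS: "s \<subseteq> S" using s_in[OF x] S_def by simp
  have "x \<subseteq> S" "l \<subseteq> S" unfolding S_def using span_sup1[of x l] span_sup2[of l x] by auto
  then have inS: "pa \<subseteq> S" "pb \<subseteq> S" unfolding pa_def pb_def
    using span_sub[of x S s] span_sub[of s S l] sub sS by auto
  have "pa \<subseteq> M" unfolding pa_def using span_sub[OF x(2) sM M] .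
  moreover have "l \<subseteq> pb" unfolding pb_def using span_sup2 .
  ultimately have ne: "pa \<noteq> pb" using lM by blast
  let ?A = "lines_in L pa" and ?B = "lines_in L pb"
  have cA: "card ?A = CARD('a) + 1"
    using plane_card[OF sub(2) d3(1) x(1) sL xs(1)] span_sup1 span_sup2 unfolding pa_def by blast
  have cB: "card ?B = CARD('a) + 1"
    using plane_card[OF sub(3) d3(2) sL lL ls_ne[symmetric]] span_sup1 span_sup2 unfolding pb_def by blast
  have "card (?A \<inter> ?B) \<le> 1" using planes_int[OF sub(2,3) d3 ne] .
  moreover have "s \<in> ?A \<inter> ?B" unfolding lines_in_def pa_def pb_def using sL span_sup1 span_sup2 by blast
  ultimately have "card (?A \<inter> ?B) = 1"
    by (metis card_0_eq empty_iff fin le_antisym less_one not_le)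
  then have cU: "card (?A \<union> ?B) = 2 * CARD('a) + 1" using card_Un_Int[of ?A ?B] cA cB by simp
  have U: "?A \<union> ?B \<subseteq> lines_in L S" using inS lines_in_mono by (metis Un_least)
  have "card (lines_in L S) \<le> 2 * CARD('a) + 1" using solid_card[OF sub(1) dS] .
  then have "?A \<union> ?B = lines_in L S" using card_subset_eq[OF fin U] card_mono[OF fin U] cU by simp
  then show ?thesis unfolding S_def pa_def pb_def by simp
qed


lemma partC_eq:
  assumes x: "x \<in> L" "x \<subseteq> M" "pg_meet_in_point x s P"
    and y: "y \<in> L" "y \<subseteq> M" "pg_meet_in_point y s P"
  shows "vec.span (x \<union> s) = vec.span (y \<union> s)"
proof (cases "x = y")
  case False
  have P: "pg_point P" "x \<inter> s = P" "y \<inter> s = P" using x(3) y(3) unfolding pg_meet_in_point_def by auto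
  have "y \<subseteq> vec.span (x \<union> s)"
    by (rule concurrent[OF x(1) sL y(1) notS(1)[OF x(3)] False notS(1)[OF y(3), symmetric] P(1)]) (use P in auto)
  then have "vec.span (y \<union> s) \<subseteq> vec.span (x \<union> s)"
    using span_sub[of y "vec.span (x \<union> s)" s] span_sup2[of s x] vec.subspace_span by blast
  moreover have "vec.dim (vec.span (x \<union> s)) = 3" "vec.dim (vec.span (y \<union> s)) = 3"
    using plane_of x y sL notS by auto
  ultimately show ?thesis using sub_eq vec.subspace_span by (metis order_refl)
qed simp

lemma partC_ne:
  assumes x: "x \<in> L" "x \<subseteq> M" "pg_meet_in_point x s P"
    and y: "y \<in> L" "y \<subseteq> M" "pg_meet_in_point y s Q"
    and PQ: "P \<noteq> Q"
  shows "lines_in L (vec.span (x \<union> l)) \<inter> lines_in L (vec.span (y \<union> l)) = lines_in L (vec.span (s \<union> l))"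
proof -
  define p1 where "p1 = vec.span (x \<union> s)"
  define p2 where "p2 = vec.span (y \<union> s)"
  have P: "pg_point P" "x \<inter> s = P" using x(3) unfolding pg_meet_in_point_def by auto
  have Q: "pg_point Q" "y \<inter> s = Q" using y(3) unfolding pg_meet_in_point_def by auto
  have sub: "vec.subspace p1" "vec.subspace p2" unfolding p1_def p2_def by (auto intro: vec.subspace_span)
  have d3: "vec.dim p1 = 3" "vec.dim p2 = 3"
    unfolding p1_def p2_def using plane_of x y sL notS by auto
  have ne: "p1 \<noteq> p2"
  proof
    assume e: "p1 = p2"
    let ?T = "{z \<in> L. P \<subseteq> z}"
    have "x \<in> ?T" using x P by auto
    then have "card ?T \<noteq> 0" by (metis card_0_eq empty_iff fin)
    moreover have "card ?T = 0 \<or> card ?T = CARD('a) + 1" using Pt P(1) unfolding cond_Pt_def by simp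
    ultimately have cT: "card ?T = CARD('a) + 1" by linarith
    have T: "?T \<subseteq> lines_in L p1"
    proof
      fix z assume z: "z \<in> ?T"
      have "z \<subseteq> p1"
      proof (cases "z = x \<or> z = s")
        case True then show ?thesis unfolding p1_def using span_sup1[of x s] span_sup2[of s x] by auto
      next
        case False
        show ?thesis unfolding p1_def
          by (rule concurrent[OF x(1) sL _ notS(1)[OF x(3)] _ _ P(1)]) (use z False P in auto)
      qed
      then show "z \<in> lines_in L p1" using z unfolding lines_in_def by auto
    qed
    have "card (lines_in L p1) = CARD('a) + 1"
      using plane_card[OF sub(1) d3(1) x(1) sL notS(1)[OF x(3)]] span_sup1[of x s] span_sup2[of s x]
      unfolding p1_def by blast
    then have "?T = lines_in L p1" using card_subset_eq[OF fin T] cT by simp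
    moreover have "y \<in> lines_in L p1" using e y(1) span_sup1[of y s] unfolding p2_def lines_in_def by auto
    ultimately have "P \<subseteq> y" by auto
    then have "P \<subseteq> Q" using P Q by auto
    then show False using sub_eq[of P Q] P(1) Q(1) PQ unfolding pg_point_def by auto
  qed
  have sm: "\<And>m. m \<in> lines_in L p1 \<Longrightarrow> m \<in> lines_in L p2 \<Longrightarrow> m = s"
  proof -
    fix m assume "m \<in> lines_in L p1" "m \<in> lines_in L p2"
    then have m: "m \<in> lines_in L (p1 \<inter> p2)" using lines_in_Int by blast
    have s: "s \<in> lines_in L (p1 \<inter> p2)"
      using sL span_sup2[of s x] span_sup2[of s y] unfolding lines_in_def p1_def p2_def by auto
    have "vec.dim (p1 \<inter> p2) \<le> 2" using planes_int_dim[OF sub d3 ne] .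
    then show "m = s" using small[OF _ _ m] small[OF _ _ s] vec.subspace_inter[OF sub] by metis
  qed
  have sC: "s \<in> lines_in L (vec.span (s \<union> l))" using sL span_sup1[of s l] unfolding lines_in_def by auto
  show ?thesis unfolding partB[OF x] partB[OF y] using sm sC unfolding p1_def p2_def by blast
qed

lemma partD:
  assumes x: "x \<in> L" "x \<subseteq> M" "pg_meet_in_point x s P"
    and y: "y \<in> L" "y \<subseteq> M" "\<not> pg_meet y s"
  shows "lines_in L (vec.span (x \<union> l)) \<inter> lines_in L (vec.span (y \<union> l)) = {l}"
proof -
  define S1 where "S1 = vec.span (x \<union> l)"
  define S2 where "S2 = vec.span (y \<union> l)"
  have "vec.dim (s \<inter> s) \<ge> 1" using line_dim[OF sL] by simp
  then have "pg_meet s s" using meet_iff line_sub sL by blast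
  then have ys: "y \<noteq> s" using y by blast
  have sub: "vec.subspace S1" "vec.subspace S2" "vec.subspace x" "vec.subspace y" "vec.subspace s"
    "vec.subspace l"
    unfolding S1_def S2_def using line_sub x y sL lL by (auto intro: vec.subspace_span)
  have dS: "vec.dim S1 = 4" "vec.dim S2 = 4"
    unfolding S1_def S2_def using disj x y ys notS by auto
  have "\<not> vec.dim (y \<inter> s) \<ge> 1" using y meet_iff[of y s] sub by simp
  then have dys: "vec.dim (y \<inter> s) = 0" by linarith
  have noS2: "\<not> s \<subseteq> S2"
  proof
    assume sS2: "s \<subseteq> S2"
    have "vec.dim (vec.span (y \<union> s)) = 4" using grass[of y s] dys sub line_dim y sL by simp
    moreover have "vec.span (y \<union> s) \<subseteq> S2 \<inter> M"
      using span_sub[of y "S2 \<inter> M" s] sS2 sM y span_sup1[of y l] vec.subspace_inter[OF sub(2) M]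
      unfolding S2_def by blast
    ultimately have "vec.dim (S2 \<inter> M) \<ge> 4" using vec.dim_subset by (metis)
    then have "S2 \<inter> M = S2" using sub_eq[of "S2 \<inter> M" S2] vec.subspace_inter[OF sub(2) M] sub dS by simp
    moreover have "l \<subseteq> S2" unfolding S2_def using span_sup2[of l y] .
    ultimately show False using lM by blast
  qed
  have sS1: "s \<subseteq> S1" using s_in[OF x] S1_def by simp
  then have ne: "S1 \<noteq> S2" using noS2 by blast
  have d12: "vec.dim (S1 \<inter> S2) \<le> 3"
  proof (rule ccontr)
    assume "\<not> ?thesis"
    then have "S1 \<inter> S2 = S1" "S1 \<inter> S2 = S2"
      using sub_eq[of "S1 \<inter> S2" S1] sub_eq[of "S1 \<inter> S2" S2] vec.subspace_inter[OF sub(1,2)] sub dS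
      by auto
    then show False using ne by blast
  qed
  have lin: "l \<in> lines_in L S1" "l \<in> lines_in L S2"
    unfolding lines_in_def S1_def S2_def using lL span_sup2[of l x] span_sup2[of l y] by auto
  have "m = l" if m1: "m \<in> lines_in L S1" and m2: "m \<in> lines_in L S2" for m
  proof (rule ccontr)
    assume ml: "m \<noteq> l"
    have mL: "m \<in> L" "m \<subseteq> S1" "m \<subseteq> S2" using m1 m2 unfolding lines_in_def by auto
    define \<sigma> where "\<sigma> = vec.span (m \<union> l)"
    have "\<sigma> \<subseteq> S1 \<inter> S2"
      unfolding \<sigma>_def using span_sub[of m "S1 \<inter> S2" l] mL lin vec.subspace_inter[OF sub(1,2)]
      unfolding lines_in_def by blast
    then have "vec.dim \<sigma> \<le> 3" using d12 vec.dim_subset by (metis le_trans)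
    moreover have g: "vec.dim \<sigma> + vec.dim (m \<inter> l) = 4"
      unfolding \<sigma>_def using grass[of m l] line_sub line_dim mL lL by simp
    moreover have "vec.dim (m \<inter> l) \<le> 1" using int_le1 mL lL ml by blast
    ultimately have dsig: "vec.dim \<sigma> = 3" "vec.dim (m \<inter> l) \<ge> 1" by linarith+
    then have mm: "pg_meet m l" using meet_iff line_sub mL lL by blast
    have "m \<in> lines_in L (vec.span (x \<union> s)) \<union> lines_in L (vec.span (s \<union> l))"
      using partB[OF x] m1 S1_def by simp
    then show False
    proof
      assume "m \<in> lines_in L (vec.span (x \<union> s))"
      then have "m \<subseteq> M" using span_sub[OF x(2) sM M] unfolding lines_in_def by blast
      then have "m = s" using partA mL mm by blast
      then show False using mL noS2 by blast
    next
      assume "m \<in> lines_in L (vec.span (s \<union> l))"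
      then have "m \<subseteq> vec.span (s \<union> l)" unfolding lines_in_def by blast
      then have "\<sigma> \<subseteq> vec.span (s \<union> l)" unfolding \<sigma>_def
        using span_sub[of m "vec.span (s \<union> l)" l] span_sup2[of l s] vec.subspace_span by blast
      moreover have "vec.dim (vec.span (s \<union> l)) = 3" using plane_of sL lL ls_ne dls by auto
      ultimately have "\<sigma> = vec.span (s \<union> l)"
        using sub_eq dsig unfolding \<sigma>_def by (metis order_refl vec.subspace_span)
      then have "s \<subseteq> S2" using \<open>\<sigma> \<subseteq> S1 \<inter> S2\<close> span_sup1[of s l] by blast
      then show False using noS2 by blast
    qed
  qed
  then show ?thesis using lin unfolding S1_def S2_def by blast
qed

end

theorem lemma5:
  fixes L :: "('a::{field,finite} ^ 'n) set set"
    and M l s :: "('a ^ 'n) set"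
  assumes lines: "\<forall>x\<in>L. pg_line x"
    and nonempty: "L \<noteq> {}"
    and Pt: "cond_Pt L" and Pl: "cond_Pl L" and Sd: "cond_Sd L" and To: "cond_To L"
    and M: "pg_subspace M"
    and l: "l \<in> L - lines_in L M"
    and s: "s \<in> lines_in L M"
    and ls: "pg_meet l s"
  shows "(\<forall>t\<in>lines_in L M. pg_meet t l \<longrightarrow> t = s)
    \<and> (\<forall>lM\<in>lines_in L M. (\<exists>P. pg_meet_in_point lM s P) \<longrightarrow>
          lines_in L (pg_join lM l) = lines_in L (pg_join lM s) \<union> lines_in L (pg_join s l))
    \<and> (\<forall>l1\<in>lines_in L M. \<forall>l2\<in>lines_in L M. \<forall>P Q.
          pg_meet_in_point l1 s P \<and> pg_meet_in_point l2 s Q \<longrightarrow>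
          lines_in L (pg_join l1 l) \<inter> lines_in L (pg_join l2 l) =
            (if P = Q then lines_in L (pg_join l1 l) else lines_in L (pg_join s l)))
    \<and> (\<forall>l1\<in>lines_in L M. \<forall>l2\<in>lines_in L M.
          (\<exists>P. pg_meet_in_point l1 s P) \<and> \<not> pg_meet l2 s \<longrightarrow>
          lines_in L (pg_join l1 l) \<inter> lines_in L (pg_join l2 l) = {l})"
  proof -
  interpret conf2 L M l s
    using lines Pl Sd Pt M l s ls unfolding pg_subspace_def lines_in_def
    by unfold_locales auto
  have a: "\<forall>t\<in>lines_in L M. pg_meet t l \<longrightarrow> t = s" using partA unfolding lines_in_def by blast
  have b: "\<forall>lM\<in>lines_in L M. (\<exists>P. pg_meet_in_point lM s P) \<longrightarrow>
          lines_in L (pg_join lM l) = lines_in L (pg_join lM s) \<union> lines_in L (pg_join s l)"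
    unfolding pg_join_def using partB unfolding lines_in_def by blast
  have c: "\<forall>l1\<in>lines_in L M. \<forall>l2\<in>lines_in L M. \<forall>P Q.
          pg_meet_in_point l1 s P \<and> pg_meet_in_point l2 s Q \<longrightarrow>
          lines_in L (pg_join l1 l) \<inter> lines_in L (pg_join l2 l) =
            (if P = Q then lines_in L (pg_join l1 l) else lines_in L (pg_join s l))"
  proof (intro ballI allI impI)
    fix l1 l2 P Q
    assume l12: "l1 \<in> lines_in L M" "l2 \<in> lines_in L M"
      and PQ: "pg_meet_in_point l1 s P \<and> pg_meet_in_point l2 s Q"
    have x: "l1 \<in> L" "l1 \<subseteq> M" "l2 \<in> L" "l2 \<subseteq> M" using l12 unfolding lines_in_def by auto
    show "lines_in L (pg_join l1 l) \<inter> lines_in L (pg_join l2 l) =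
            (if P = Q then lines_in L (pg_join l1 l) else lines_in L (pg_join s l))"
    proof (cases "P = Q")
      case True
      then have "vec.span (l1 \<union> s) = vec.span (l2 \<union> s)" using partC_eq x PQ by blast
      then have "lines_in L (pg_join l1 l) = lines_in L (pg_join l2 l)"
        unfolding pg_join_def using partB x PQ by metis
      then show ?thesis using True by simp
    next
      case False
      then show ?thesis unfolding pg_join_def using partC_ne[OF x(1,2) conjunct1[OF PQ] x(3,4) conjunct2[OF PQ] False] by simp
    qed
  qed
  have d: "\<forall>l1\<in>lines_in L M. \<forall>l2\<in>lines_in L M.
          (\<exists>P. pg_meet_in_point l1 s P) \<and> \<not> pg_meet l2 s \<longrightarrow>
          lines_in L (pg_join l1 l) \<inter> lines_in L (pg_join l2 l) = {l}"
    unfolding pg_join_def using partD unfolding lines_in_def by blast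
  show ?thesis using a b c d by blast
qed

end
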